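(* Let $\beta>0$ and let $\{M(N)\}_{N\ge1}$ be a sequence of positive integers. If the family $\{Z^{f,\beta,h_c^a(\beta)}_{N,M(N),\omega}\}_{N\ge1}$ is uniformly integrable under $\mathbb P$, then there exists $\zeta>0$ such that for every sequence of events $\{A_N\}_{N\ge1}$ (events for $\tau$) with $\lim_{N\to\infty}\mathbf P(A_N)=0$ there is $N_0\in\mathbb N$ such that $$\inf_{N\ge N_0}\mathbb P\Big(\mathbf P^{f,\beta,h_c^a(\beta)}_{N,M(N),\omega}(A_N)\le\tfrac12\ \text{ and }\ Z^{f,\beta,h_c^a(\beta)}_{N,M(N),\omega}>\tfrac12\Big)\ge\zeta.$$
   Context: Let $\mathbb N=\{1,2,\dots\}$. Fix $\alpha\ge0$ and a slowly varying function $L$, and set $K(n)=L(n)n^{-(2+\alpha)}$, normalized so that $\sum_{n,m\in\mathbb N}K(n+m)=1$. Let $\tau$ be a bivariate renewal process with law $\mathbf P$: $\tau_0=(0,0)$, i.i.d. increments with $\mathbf P(\tau_1=(n,m))=K(n+m)$, $n,m\in\mathbb N$; $\tau$ is identified with the random set of its points. Let $\omega=\{\omega_{n,m}\}$ be i.i.d. real random variables with law $\mathbb P$, centered, unit variance, $Q(\beta)=\mathbb E[e^{\beta\omega_{1,1}}]<\infty$ for all $\beta$; set $h_c^a(\beta)=-\log Q(\beta)$. The free partition function is $Z^{f,\beta,h}_{N,M,\omega}=\mathbf E[\exp(\sum_{n=1}^N\sum_{m=1}^M(\beta\omega_{n,m}+h)\mathbf 1_{(n,m)\in\tau})]$, and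 $\mathbf P^{f,\beta,h}_{N,M,\omega}$ is the probability measure on $\tau$ with density $\exp(\sum_{n=1}^N\sum_{m=1}^M(\beta\omega_{n,m}+h)\mathbf 1_{(n,m)\in\tau})/Z^{f,\beta,h}_{N,M,\omega}$ with respect to $\mathbf P$. *)

theory Defs
  imports "HOL-Probability.Probability"
begin

definition slowly_varying :: "(real \<Rightarrow> real) \<Rightarrow> bool" where
  "slowly_varying L \<longleftrightarrow> L \<in> borel_measurable borel \<and> (\<forall>x>0. L x > 0) \<and>
     (\<forall>c>0. ((\<lambda>x. L (c * x) / L x) \<longlongrightarrow> 1) at_top)"

text \<open>The renewal process is realised on the space of i.i.d. increment streams.
  Point number k of tau is the k-th partial sum of the increments (tau_0 = (0,0)).\<close>
definition renewal_point :: "(nat \<times> nat) stream \<Rightarrow> nat \<Rightarrow> nat \<times> nat" where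
  "renewal_point s k = ((\<Sum>i<k. fst (s !! i)), (\<Sum>i<k. snd (s !! i)))"

definition renewal_set :: "(nat \<times> nat) stream \<Rightarrow> (nat \<times> nat) set" where
  "renewal_set s = range (renewal_point s)"

definition renewal_law :: "(nat \<times> nat) pmf \<Rightarrow> (nat \<times> nat) stream measure" where
  "renewal_law inc = stream_space (measure_pmf inc)"

definition hamiltonian ::
  "real \<Rightarrow> real \<Rightarrow> nat \<Rightarrow> nat \<Rightarrow> (nat \<times> nat \<Rightarrow> real) \<Rightarrow> (nat \<times> nat) stream \<Rightarrow> real" where
  "hamiltonian \<beta> h N M \<omega> s =
     (\<Sum>n\<in>{1..N}. \<Sum>m\<in>{1..M}. (\<beta> * \<omega> (n, m) + h) * indicator (renewal_set s) (n, m))"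

definition free_Z ::
  "(nat \<times> nat) pmf \<Rightarrow> real \<Rightarrow> real \<Rightarrow> nat \<Rightarrow> nat \<Rightarrow> (nat \<times> nat \<Rightarrow> real) \<Rightarrow> real" where
  "free_Z inc \<beta> h N M \<omega> = (\<integral>s. exp (hamiltonian \<beta> h N M \<omega> s) \<partial>renewal_law inc)"

definition polymer_prob ::
  "(nat \<times> nat) pmf \<Rightarrow> real \<Rightarrow> real \<Rightarrow> nat \<Rightarrow> nat \<Rightarrow> (nat \<times> nat \<Rightarrow> real)
     \<Rightarrow> (nat \<times> nat) stream set \<Rightarrow> real" where
  "polymer_prob inc \<beta> h N M \<omega> A =
     (\<integral>s. indicator A s * exp (hamiltonian \<beta> h N M \<omega> s) \<partial>renewal_law inc) / free_Z inc \<beta> h N M \<omega>"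

definition uniformly_integrable :: "'a measure \<Rightarrow> 'i set \<Rightarrow> ('i \<Rightarrow> 'a \<Rightarrow> real) \<Rightarrow> bool" where
  "uniformly_integrable \<Omega> I f \<longleftrightarrow> (\<forall>i\<in>I. f i \<in> borel_measurable \<Omega>) \<and>
     ((\<lambda>K::real. SUP i\<in>I. \<integral>\<^sup>+ x. ennreal \<bar>f i x\<bar> * indicator {x. \<bar>f i x\<bar> > K} x \<partial>\<Omega>)
        \<longlongrightarrow> 0) at_top"

end

theory Submission
  imports Defs
begin

lemma renewal_mem_eq:
  "{s. p \<in> renewal_set s} = (\<Union>k. {s. (\<Sum>i<k. real (fst (s !! i))) = real (fst p) \<and> (\<Sum>i<k. real (snd (s !! i))) = real (snd p)})"
proof (intro set_eqI iffI)
  fix s assume "s \<in> {s. p \<in> renewal_set s}"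
  then obtain k where "p = renewal_point s k" by (auto simp: renewal_set_def)
  then have "fst p = (\<Sum>i<k. fst (s !! i))" "snd p = (\<Sum>i<k. snd (s !! i))"
    by (auto simp: renewal_point_def)
  then show "s \<in> (\<Union>k. {s. (\<Sum>i<k. real (fst (s !! i))) = real (fst p) \<and> (\<Sum>i<k. real (snd (s !! i))) = real (snd p)})"
    by (auto simp flip: of_nat_sum)
next
  fix s assume "s \<in> (\<Union>k. {s. (\<Sum>i<k. real (fst (s !! i))) = real (fst p) \<and> (\<Sum>i<k. real (snd (s !! i))) = real (snd p)})"
  then obtain k where "(\<Sum>i<k. real (fst (s !! i))) = real (fst p)" "(\<Sum>i<k. real (snd (s !! i))) = real (snd p)"
    by blast
  then have "fst p = (\<Sum>i<k. fst (s !! i))" "snd p = (\<Sum>i<k. snd (s !! i))"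
    by (simp_all flip: of_nat_sum)
  then have "p = renewal_point s k" by (simp add: renewal_point_def prod_eq_iff)
  then show "s \<in> {s. p \<in> renewal_set s}" by (auto simp: renewal_set_def)
qed

lemma renewal_mem_meas:
  "{s. p \<in> renewal_set s} \<in> sets (stream_space (measure_pmf inc))"
proof -
  have m: "\<And>i f. (\<lambda>s. real (f (s !! i))) \<in> borel_measurable (stream_space (measure_pmf inc))"
    by (rule measurable_compose[OF measurable_snth]) simp
  have "\<And>k. {s. (\<Sum>i<k. real (fst (s !! i))) = real (fst p) \<and> (\<Sum>i<k. real (snd (s !! i))) = real (snd p)} \<in> sets (stream_space (measure_pmf inc))"
  proof -
    fix k
    have [measurable]: "(\<lambda>s. (\<Sum>i<k. real (fst (s !! i)))) \<in> borel_measurable (stream_space (measure_pmf inc))"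
      "(\<lambda>s. (\<Sum>i<k. real (snd (s !! i)))) \<in> borel_measurable (stream_space (measure_pmf inc))"
      using m by (auto intro!: borel_measurable_sum)
    have "{s \<in> space (stream_space (measure_pmf inc)). (\<Sum>i<k. real (fst (s !! i))) = real (fst p) \<and> (\<Sum>i<k. real (snd (s !! i))) = real (snd p)} \<in> sets (stream_space (measure_pmf inc))"
      by measurable
    then show "{s. (\<Sum>i<k. real (fst (s !! i))) = real (fst p) \<and> (\<Sum>i<k. real (snd (s !! i))) = real (snd p)} \<in> sets (stream_space (measure_pmf inc))"
      by (simp add: space_stream_space)
  qed
  then show ?thesis unfolding renewal_mem_eq
    by (intro sets.countable_UN') auto
qed

lemma H_sum: "hamiltonian \<beta> h N Mn \<omega> s = (\<Sum>p\<in>({1..N}\<times>{1..Mn}) \<inter> renewal_set s. \<beta> * \<omega> p + h)"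
proof -
  have "hamiltonian \<beta> h N Mn \<omega> s = (\<Sum>p\<in>{1..N}\<times>{1..Mn}. (\<beta> * \<omega> p + h) * indicator (renewal_set s) p)"
    unfolding hamiltonian_def sum.cartesian_product by (intro sum.cong refl) auto
  also have "\<dots> = (\<Sum>p\<in>{1..N}\<times>{1..Mn}. if p \<in> renewal_set s then \<beta> * \<omega> p + h else 0)"
    by (intro sum.cong refl) (simp add: indicator_def)
  also have "\<dots> = (\<Sum>p\<in>({1..N}\<times>{1..Mn}) \<inter> renewal_set s. \<beta> * \<omega> p + h)"
    by (rule sum.inter_restrict[symmetric]) simp
  finally show ?thesis .
qed

lemma H_bound: "\<bar>hamiltonian \<beta> h N Mn \<omega> s\<bar> \<le> (\<Sum>p\<in>{1..N}\<times>{1..Mn}. \<bar>\<beta> * \<omega> p + h\<bar>)"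
proof -
  have "\<bar>hamiltonian \<beta> h N Mn \<omega> s\<bar> \<le> (\<Sum>p\<in>({1..N}\<times>{1..Mn}) \<inter> renewal_set s. \<bar>\<beta> * \<omega> p + h\<bar>)"
    unfolding H_sum by (rule sum_abs)
  also have "\<dots> \<le> (\<Sum>p\<in>{1..N}\<times>{1..Mn}. \<bar>\<beta> * \<omega> p + h\<bar>)"
    by (rule sum_mono2) auto
  finally show ?thesis .
qed

lemma H_meas:
  assumes mu: "sets \<mu> = sets borel"
  shows "(\<lambda>(\<omega>,s). hamiltonian \<beta> h N Mn \<omega> s) \<in> borel_measurable (Pi\<^sub>M (UNIV :: (nat \<times> nat) set) (\<lambda>_. \<mu>) \<Otimes>\<^sub>M stream_space (measure_pmf inc))"
proof -
  have c: "\<And>p. (\<lambda>\<omega>::nat\<times>nat\<Rightarrow>real. \<omega> p) \<in> borel_measurable (Pi\<^sub>M UNIV (\<lambda>_. \<mu>))"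
  proof -
    fix p :: "nat \<times> nat"
    have "(\<lambda>\<omega>::nat\<times>nat\<Rightarrow>real. \<omega> p) \<in> measurable (Pi\<^sub>M UNIV (\<lambda>_. \<mu>)) \<mu>"
      by (rule measurable_component_singleton) simp
    then show "(\<lambda>\<omega>::nat\<times>nat\<Rightarrow>real. \<omega> p) \<in> borel_measurable (Pi\<^sub>M UNIV (\<lambda>_. \<mu>))"
      by (simp add: measurable_cong_sets[OF refl mu])
  qed
  have i: "\<And>p. (\<lambda>s. indicator (renewal_set s) p :: real) \<in> borel_measurable (stream_space (measure_pmf inc))"
  proof -
    fix p
    have "(\<lambda>s. indicator (renewal_set s) p :: real) = indicator {s. p \<in> renewal_set s}"
      by (auto simp: indicator_def)
    then show "(\<lambda>s. indicator (renewal_set s) p :: real) \<in> borel_measurable (stream_space (measure_pmf inc))"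
      using renewal_mem_meas by simp
  qed
  have [measurable]: "\<And>p. (\<lambda>x. fst x p) \<in> borel_measurable (Pi\<^sub>M (UNIV :: (nat \<times> nat) set) (\<lambda>_. \<mu>) \<Otimes>\<^sub>M stream_space (measure_pmf inc))"
    by (rule measurable_compose[OF measurable_fst c])
  have [measurable]: "\<And>p. (\<lambda>x. indicator (renewal_set (snd x)) p :: real) \<in> borel_measurable (Pi\<^sub>M (UNIV :: (nat \<times> nat) set) (\<lambda>_. \<mu>) \<Otimes>\<^sub>M stream_space (measure_pmf inc))"
    by (rule measurable_compose[OF measurable_snd i])
  show ?thesis unfolding hamiltonian_def case_prod_beta by measurable
qed

lemma comp_meas:
  assumes mu: "sets \<mu> = sets borel" and that: "p \<in> I"
  shows "(\<lambda>\<omega>::'i\<Rightarrow>real. \<omega> p) \<in> borel_measurable (Pi\<^sub>M I (\<lambda>_. \<mu>))"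
proof -
  have "(\<lambda>\<omega>::'i\<Rightarrow>real. \<omega> p) \<in> measurable (Pi\<^sub>M I (\<lambda>_. \<mu>)) \<mu>"
    by (rule measurable_component_singleton) (simp add: that)
  then show ?thesis
    by (simp add: measurable_cong_sets[OF refl mu])
qed

lemma E_exp:
  assumes mu: "prob_space \<mu>" "sets \<mu> = sets borel"
  and one: "(\<integral>\<^sup>+x. ennreal (exp (\<beta> * x + h)) \<partial>\<mu>) = 1"
  shows "(\<integral>\<^sup>+\<omega>. ennreal (exp (hamiltonian \<beta> h N Mn \<omega> s)) \<partial>Pi\<^sub>M (UNIV::(nat\<times>nat) set) (\<lambda>_. \<mu>)) = 1"
proof -
  interpret P: product_prob_space "\<lambda>_::nat\<times>nat. \<mu>" "UNIV :: (nat\<times>nat) set"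
    by (simp add: product_prob_space_def product_prob_space_axioms_def product_sigma_finite_def
        mu prob_space_imp_sigma_finite)
  define S where "S = ({1..N}\<times>{1..Mn}) \<inter> renewal_set s"
  have fin: "finite S" unfolding S_def by (intro finite_Int) simp
  have eq: "\<And>\<omega>. ennreal (exp (hamiltonian \<beta> h N Mn \<omega> s)) = (\<Prod>p\<in>S. ennreal (exp (\<beta> * \<omega> p + h)))"
    unfolding H_sum S_def[symmetric] using fin
    by (simp add: exp_sum prod_ennreal)
  have fm: "(\<lambda>x. \<Prod>p\<in>S. ennreal (exp (\<beta> * x p + h))) \<in> borel_measurable (Pi\<^sub>M S (\<lambda>_. \<mu>))"
  proof (rule borel_measurable_prod_ennreal)
    fix p assume p: "p \<in> S"
    have [measurable]: "(\<lambda>\<omega>. \<omega> p) \<in> borel_measurable (Pi\<^sub>M S (\<lambda>_. \<mu>))"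
      by (rule comp_meas[OF mu(2) p])
    show "(\<lambda>x. ennreal (exp (\<beta> * x p + h))) \<in> borel_measurable (Pi\<^sub>M S (\<lambda>_. \<mu>))" by measurable
  qed
  have "(\<integral>\<^sup>+\<omega>. ennreal (exp (hamiltonian \<beta> h N Mn \<omega> s)) \<partial>Pi\<^sub>M UNIV (\<lambda>_. \<mu>))
      = (\<integral>\<^sup>+\<omega>. (\<Prod>p\<in>S. ennreal (exp (\<beta> * restrict \<omega> S p + h))) \<partial>Pi\<^sub>M UNIV (\<lambda>_. \<mu>))"
    unfolding eq by (intro nn_integral_cong prod.cong refl) simp
  also have "\<dots> = (\<integral>\<^sup>+x. (\<Prod>p\<in>S. ennreal (exp (\<beta> * x p + h))) \<partial>distr (Pi\<^sub>M UNIV (\<lambda>_. \<mu>)) (Pi\<^sub>M S (\<lambda>_. \<mu>)) (\<lambda>x. restrict x S))"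
    apply (rule nn_integral_distr[symmetric])
     apply (rule measurable_restrict_subset, simp)
    using fm by (subst measurable_cong_sets[OF sets_distr refl])
  also have "\<dots> = (\<integral>\<^sup>+x. (\<Prod>p\<in>S. ennreal (exp (\<beta> * x p + h))) \<partial>Pi\<^sub>M S (\<lambda>_. \<mu>))"
    by (simp only: P.distr_PiM_restrict_finite[OF fin subset_UNIV])
  also have "\<dots> = (\<Prod>p\<in>S. \<integral>\<^sup>+x. ennreal (exp (\<beta> * x + h)) \<partial>\<mu>)"
    by (rule P.product_nn_integral_prod[OF fin]) (simp add: measurable_cong_sets[OF mu(2) refl])
  also have "\<dots> = 1" using one by simp
  finally show ?thesis .
qed

lemma W_int:
  assumes mu: "prob_space \<mu>" "sets \<mu> = sets borel"
  and one: "(\<integral>\<^sup>+x. ennreal (exp (\<beta> * x + h)) \<partial>\<mu>) = 1"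
  and g: "g \<in> borel_measurable (stream_space (measure_pmf inc))"
  and g0: "\<And>s. 0 \<le> g s" and g1: "\<And>s. g s \<le> 1"
  shows "(\<lambda>\<omega>. \<integral>s. g s * exp (hamiltonian \<beta> h N Mn \<omega> s) \<partial>stream_space (measure_pmf inc))
            \<in> borel_measurable (Pi\<^sub>M (UNIV::(nat\<times>nat) set) (\<lambda>_. \<mu>))"
    "(\<integral>\<^sup>+\<omega>. ennreal (\<integral>s. g s * exp (hamiltonian \<beta> h N Mn \<omega> s) \<partial>stream_space (measure_pmf inc))
            \<partial>Pi\<^sub>M (UNIV::(nat\<times>nat) set) (\<lambda>_. \<mu>))
     = (\<integral>\<^sup>+s. ennreal (g s) \<partial>stream_space (measure_pmf inc))"
proof -
  interpret P: product_prob_space "\<lambda>_::nat\<times>nat. \<mu>" "UNIV :: (nat\<times>nat) set"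
    by (simp add: product_prob_space_def product_prob_space_axioms_def product_sigma_finite_def
        mu prob_space_imp_sigma_finite)
  interpret S: prob_space "stream_space (measure_pmf inc)"
    by (rule prob_space.prob_space_stream_space[OF prob_space_measure_pmf])
  interpret PS: pair_sigma_finite "Pi\<^sub>M (UNIV::(nat\<times>nat) set) (\<lambda>_. \<mu>)" "stream_space (measure_pmf inc)"
    by unfold_locales
  define F where "F = (\<lambda>(\<omega>, s). g s * exp (hamiltonian \<beta> h N Mn \<omega> s))"
  have Hm[measurable]: "(\<lambda>(\<omega>,s). hamiltonian \<beta> h N Mn \<omega> s) \<in> borel_measurable (Pi\<^sub>M (UNIV::(nat\<times>nat) set) (\<lambda>_. \<mu>) \<Otimes>\<^sub>M stream_space (measure_pmf inc))"
    by (rule H_meas[OF mu(2)])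
  have gm[measurable]: "(\<lambda>x. g (snd x)) \<in> borel_measurable (Pi\<^sub>M (UNIV::(nat\<times>nat) set) (\<lambda>_. \<mu>) \<Otimes>\<^sub>M stream_space (measure_pmf inc))"
    by (rule measurable_compose[OF measurable_snd g])
  have Hm': "(\<lambda>x. hamiltonian \<beta> h N Mn (fst x) (snd x)) \<in> borel_measurable (Pi\<^sub>M (UNIV::(nat\<times>nat) set) (\<lambda>_. \<mu>) \<Otimes>\<^sub>M stream_space (measure_pmf inc))"
    using Hm by (simp add: case_prod_beta)
  have Fm: "F \<in> borel_measurable (Pi\<^sub>M (UNIV::(nat\<times>nat) set) (\<lambda>_. \<mu>) \<Otimes>\<^sub>M stream_space (measure_pmf inc))"
    unfolding F_def case_prod_beta
    by (intro borel_measurable_times gm measurable_compose[OF Hm' borel_measurable_exp])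
  show "(\<lambda>\<omega>. \<integral>s. g s * exp (hamiltonian \<beta> h N Mn \<omega> s) \<partial>stream_space (measure_pmf inc))
            \<in> borel_measurable (Pi\<^sub>M (UNIV::(nat\<times>nat) set) (\<lambda>_. \<mu>))"
    by (rule S.borel_measurable_lebesgue_integral) (use Fm in \<open>simp add: F_def\<close>)
  have int: "integrable (stream_space (measure_pmf inc)) (\<lambda>s. g s * exp (hamiltonian \<beta> h N Mn \<omega> s))"
    if w: "\<omega> \<in> space (Pi\<^sub>M (UNIV::(nat\<times>nat) set) (\<lambda>_. \<mu>))" for \<omega>
  proof (rule S.integrable_const_bound[where B="exp (\<Sum>p\<in>{1..N}\<times>{1..Mn}. \<bar>\<beta> * \<omega> p + h\<bar>)"])
    show "AE x in stream_space (measure_pmf inc). norm (g x * exp (hamiltonian \<beta> h N Mn \<omega> x)) \<le> exp (\<Sum>p\<in>{1..N}\<times>{1..Mn}. \<bar>\<beta> * \<omega> p + h\<bar>)"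
    proof (intro AE_I2)
      fix x
      have "norm (g x * exp (hamiltonian \<beta> h N Mn \<omega> x)) = g x * exp (hamiltonian \<beta> h N Mn \<omega> x)"
        using g0[of x] by simp
      also have "\<dots> \<le> 1 * exp (hamiltonian \<beta> h N Mn \<omega> x)"
        using g1[of x] by (intro mult_right_mono) auto
      also have "\<dots> \<le> exp (\<Sum>p\<in>{1..N}\<times>{1..Mn}. \<bar>\<beta> * \<omega> p + h\<bar>)"
        using H_bound[of \<beta> h N Mn \<omega> x] by simp
      finally show "norm (g x * exp (hamiltonian \<beta> h N Mn \<omega> x)) \<le> exp (\<Sum>p\<in>{1..N}\<times>{1..Mn}. \<bar>\<beta> * \<omega> p + h\<bar>)" .
    qed
    show "(\<lambda>s. g s * exp (hamiltonian \<beta> h N Mn \<omega> s)) \<in> borel_measurable (stream_space (measure_pmf inc))"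
      using measurable_Pair2[OF Fm w] by (simp add: F_def)
  qed
  have "(\<integral>\<^sup>+\<omega>. ennreal (\<integral>s. g s * exp (hamiltonian \<beta> h N Mn \<omega> s) \<partial>stream_space (measure_pmf inc))
            \<partial>Pi\<^sub>M (UNIV::(nat\<times>nat) set) (\<lambda>_. \<mu>))
      = (\<integral>\<^sup>+\<omega>. (\<integral>\<^sup>+s. ennreal (F (\<omega>, s)) \<partial>stream_space (measure_pmf inc)) \<partial>Pi\<^sub>M (UNIV::(nat\<times>nat) set) (\<lambda>_. \<mu>))"
  proof (intro nn_integral_cong)
    fix \<omega> assume w: "\<omega> \<in> space (Pi\<^sub>M (UNIV::(nat\<times>nat) set) (\<lambda>_. \<mu>))"
    have "(\<integral>\<^sup>+s. ennreal (g s * exp (hamiltonian \<beta> h N Mn \<omega> s)) \<partial>stream_space (measure_pmf inc))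
       = ennreal (\<integral>s. g s * exp (hamiltonian \<beta> h N Mn \<omega> s) \<partial>stream_space (measure_pmf inc))"
      by (rule nn_integral_eq_integral[OF int[OF w]]) (use g0 in auto)
    then show "ennreal (\<integral>s. g s * exp (hamiltonian \<beta> h N Mn \<omega> s) \<partial>stream_space (measure_pmf inc))
       = (\<integral>\<^sup>+s. ennreal (F (\<omega>, s)) \<partial>stream_space (measure_pmf inc))"
      by (simp add: F_def)
  qed
  also have "\<dots> = (\<integral>\<^sup>+s. (\<integral>\<^sup>+\<omega>. ennreal (F (\<omega>, s)) \<partial>Pi\<^sub>M (UNIV::(nat\<times>nat) set) (\<lambda>_. \<mu>)) \<partial>stream_space (measure_pmf inc))"
    by (rule PS.Fubini[symmetric]) (use Fm in simp)
  also have "\<dots> = (\<integral>\<^sup>+s. ennreal (g s) * (\<integral>\<^sup>+\<omega>. ennreal (exp (hamiltonian \<beta> h N Mn \<omega> s)) \<partial>Pi\<^sub>M (UNIV::(nat\<times>nat) set) (\<lambda>_. \<mu>)) \<partial>stream_space (measure_pmf inc))"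
    apply (intro nn_integral_cong)
    apply (subst nn_integral_cmult[symmetric])
    using g0 by (auto simp: F_def ennreal_mult)
  also have "\<dots> = (\<integral>\<^sup>+s. ennreal (g s) \<partial>stream_space (measure_pmf inc))"
    by (simp add: E_exp[OF mu one])
  finally show "(\<integral>\<^sup>+\<omega>. ennreal (\<integral>s. g s * exp (hamiltonian \<beta> h N Mn \<omega> s) \<partial>stream_space (measure_pmf inc))
            \<partial>Pi\<^sub>M (UNIV::(nat\<times>nat) set) (\<lambda>_. \<mu>))
     = (\<integral>\<^sup>+s. ennreal (g s) \<partial>stream_space (measure_pmf inc))" .
qed

lemma Z_facts:
  assumes mu: "prob_space \<mu>" "sets \<mu> = sets borel"
  and one: "(\<integral>\<^sup>+x. ennreal (exp (\<beta> * x + h)) \<partial>\<mu>) = 1"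
  shows "(\<lambda>\<omega>. free_Z inc \<beta> h N Mn \<omega>) \<in> borel_measurable (Pi\<^sub>M (UNIV::(nat\<times>nat) set) (\<lambda>_. \<mu>))"
    "(\<integral>\<^sup>+\<omega>. ennreal (free_Z inc \<beta> h N Mn \<omega>) \<partial>Pi\<^sub>M (UNIV::(nat\<times>nat) set) (\<lambda>_. \<mu>)) = 1"
proof -
  interpret S: prob_space "stream_space (measure_pmf inc)"
    by (rule prob_space.prob_space_stream_space[OF prob_space_measure_pmf])
  have eq: "free_Z inc \<beta> h N Mn \<omega> = (\<integral>s. (\<lambda>_. 1::real) s * exp (hamiltonian \<beta> h N Mn \<omega> s) \<partial>stream_space (measure_pmf inc))" for \<omega>
    by (simp add: free_Z_def renewal_law_def)
  note W = W_int[OF mu one, of "\<lambda>_. 1" inc N Mn]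
  show "(\<lambda>\<omega>. free_Z inc \<beta> h N Mn \<omega>) \<in> borel_measurable (Pi\<^sub>M (UNIV::(nat\<times>nat) set) (\<lambda>_. \<mu>))"
    unfolding eq by (rule W(1)) auto
  have "(\<integral>\<^sup>+\<omega>. ennreal (free_Z inc \<beta> h N Mn \<omega>) \<partial>Pi\<^sub>M (UNIV::(nat\<times>nat) set) (\<lambda>_. \<mu>))
     = (\<integral>\<^sup>+s. ennreal 1 \<partial>stream_space (measure_pmf inc))"
    unfolding eq by (rule W(2)) auto
  also have "\<dots> = 1" by (simp add: S.emeasure_space_1)
  finally show "(\<integral>\<^sup>+\<omega>. ennreal (free_Z inc \<beta> h N Mn \<omega>) \<partial>Pi\<^sub>M (UNIV::(nat\<times>nat) set) (\<lambda>_. \<mu>)) = 1" .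
qed

lemma W_facts:
  assumes mu: "prob_space \<mu>" "sets \<mu> = sets borel"
  and one: "(\<integral>\<^sup>+x. ennreal (exp (\<beta> * x + h)) \<partial>\<mu>) = 1"
  and A: "A \<in> sets (renewal_law inc)"
  shows "(\<lambda>\<omega>. \<integral>s. indicator A s * exp (hamiltonian \<beta> h N Mn \<omega> s) \<partial>renewal_law inc) \<in> borel_measurable (Pi\<^sub>M (UNIV::(nat\<times>nat) set) (\<lambda>_. \<mu>))"
    "(\<integral>\<^sup>+\<omega>. ennreal (\<integral>s. indicator A s * exp (hamiltonian \<beta> h N Mn \<omega> s) \<partial>renewal_law inc) \<partial>Pi\<^sub>M (UNIV::(nat\<times>nat) set) (\<lambda>_. \<mu>))
       = emeasure (renewal_law inc) A"
proof -
  have Am: "indicator A \<in> borel_measurable (stream_space (measure_pmf inc))"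
    using A by (simp add: renewal_law_def ennreal_indicator nn_integral_indicator)
  note W = W_int[OF mu one Am _ _, of N Mn]
  show "(\<lambda>\<omega>. \<integral>s. indicator A s * exp (hamiltonian \<beta> h N Mn \<omega> s) \<partial>renewal_law inc) \<in> borel_measurable (Pi\<^sub>M (UNIV::(nat\<times>nat) set) (\<lambda>_. \<mu>))"
    unfolding renewal_law_def by (rule W(1)) (auto simp: indicator_def)
  have "(\<integral>\<^sup>+\<omega>. ennreal (\<integral>s. indicator A s * exp (hamiltonian \<beta> h N Mn \<omega> s) \<partial>renewal_law inc) \<partial>Pi\<^sub>M (UNIV::(nat\<times>nat) set) (\<lambda>_. \<mu>))
     = (\<integral>\<^sup>+s. ennreal (indicator A s) \<partial>stream_space (measure_pmf inc))"
    unfolding renewal_law_def by (rule W(2)) (auto simp: indicator_def)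
  also have "\<dots> = emeasure (renewal_law inc) A"
    using A by (simp add: renewal_law_def ennreal_indicator nn_integral_indicator)
  finally show "(\<integral>\<^sup>+\<omega>. ennreal (\<integral>s. indicator A s * exp (hamiltonian \<beta> h N Mn \<omega> s) \<partial>renewal_law inc) \<partial>Pi\<^sub>M (UNIV::(nat\<times>nat) set) (\<lambda>_. \<mu>))
       = emeasure (renewal_law inc) A" .
qed

theorem proposition3p1:
  fixes \<alpha> :: real and L :: "real \<Rightarrow> real" and K :: "nat \<Rightarrow> real"
    and inc :: "(nat \<times> nat) pmf" and \<mu> :: "real measure"
    and \<beta> :: real and M :: "nat \<Rightarrow> nat"
  assumes alpha: "\<alpha> \<ge> 0"
    and L_sv: "slowly_varying L"
    and K_def: "\<And>n. K n = L (real n) * real n powr (- (2 + \<alpha>))"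
    and K_norm: "((\<lambda>(n, m). K (n + m)) has_sum 1) ({1..} \<times> {1..})"
    and inc_law: "\<And>n m. pmf inc (n, m) = (if 1 \<le> n \<and> 1 \<le> m then K (n + m) else 0)"
    and mu_prob: "prob_space \<mu>"
    and mu_borel: "sets \<mu> = sets borel"
    and mu_centered: "integrable \<mu> (\<lambda>x. x) \<and> (\<integral>x. x \<partial>\<mu>) = 0"
    and mu_var: "integrable \<mu> (\<lambda>x. x\<^sup>2) \<and> (\<integral>x. x\<^sup>2 \<partial>\<mu>) = 1"
    and mu_exp: "\<And>b. integrable \<mu> (\<lambda>x. exp (b * x))"
    and beta: "\<beta> > 0"
    and M_pos: "\<And>N. 1 \<le> N \<Longrightarrow> 1 \<le> M N"
    and UI: "uniformly_integrable (Pi\<^sub>M UNIV (\<lambda>_. \<mu>)) {1..}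
               (\<lambda>N \<omega>. free_Z inc \<beta> (- ln (\<integral>x. exp (\<beta> * x) \<partial>\<mu>)) N (M N) \<omega>)"
  shows "\<exists>\<zeta>>0. \<forall>A :: nat \<Rightarrow> (nat \<times> nat) stream set.
           (\<forall>N. A N \<in> sets (renewal_law inc)) \<longrightarrow>
           (\<lambda>N. measure (renewal_law inc) (A N)) \<longlonglongrightarrow> 0 \<longrightarrow>
           (\<exists>N0\<ge>1. \<forall>N\<ge>N0.
              measure (Pi\<^sub>M UNIV (\<lambda>_. \<mu>))
                {\<omega> \<in> space (Pi\<^sub>M UNIV (\<lambda>_. \<mu>)).
                   polymer_prob inc \<beta> (- ln (\<integral>x. exp (\<beta> * x) \<partial>\<mu>)) N (M N) \<omega> (A N) \<le> 1/2 \<and>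
                   free_Z inc \<beta> (- ln (\<integral>x. exp (\<beta> * x) \<partial>\<mu>)) N (M N) \<omega> > 1/2} \<ge> \<zeta>)"
proof -
  define \<Omega> where "\<Omega> = Pi\<^sub>M (UNIV::(nat\<times>nat) set) (\<lambda>_. \<mu>)"
  interpret O: prob_space \<Omega> unfolding \<Omega>_def by (rule prob_space_PiM) (rule mu_prob)
  interpret R: prob_space "renewal_law inc" unfolding renewal_law_def
    by (rule prob_space.prob_space_stream_space[OF prob_space_measure_pmf])
  define Q where "Q = (\<integral>x. exp (\<beta> * x) \<partial>\<mu>)"
  define h where "h = - ln Q"
  have Qpos: "Q > 0"
  proof -
    have i: "integrable \<mu> (\<lambda>x. exp (\<beta> * x))" by (rule mu_exp)
    have "Q \<ge> 0" unfolding Q_def by simp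
    moreover have "Q \<noteq> 0"
    proof
      assume "Q = 0"
      then have "AE x in \<mu>. exp (\<beta> * x) = 0"
        using integral_nonneg_eq_0_iff_AE[OF i] unfolding Q_def by simp
      then have "AE x in \<mu>. False" by simp
      then show False using prob_space.AE_False[OF mu_prob] by simp
    qed
    ultimately show ?thesis by simp
  qed
  have one: "(\<integral>\<^sup>+x. ennreal (exp (\<beta> * x + h)) \<partial>\<mu>) = 1"
  proof -
    have "(\<integral>\<^sup>+x. ennreal (exp (\<beta> * x + h)) \<partial>\<mu>) = (\<integral>\<^sup>+x. ennreal (exp (\<beta> * x) / Q) \<partial>\<mu>)"
      using Qpos by (intro nn_integral_cong) (simp add: h_def exp_diff)
    also have "\<dots> = ennreal (\<integral>x. exp (\<beta> * x) / Q \<partial>\<mu>)"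
      by (rule nn_integral_eq_integral) (use mu_exp Qpos in auto)
    also have "\<dots> = 1" using Qpos by (simp add: Q_def[symmetric])
    finally show ?thesis .
  qed
  define Z where "Z = (\<lambda>N \<omega>. free_Z inc \<beta> h N (M N) \<omega>)"
  have Zm[measurable]: "\<And>N. Z N \<in> borel_measurable \<Omega>"
    unfolding Z_def \<Omega>_def by (rule Z_facts(1)[OF mu_prob mu_borel one])
  have Zint: "\<And>N. (\<integral>\<^sup>+\<omega>. ennreal (Z N \<omega>) \<partial>\<Omega>) = 1"
    unfolding Z_def \<Omega>_def by (rule Z_facts(2)[OF mu_prob mu_borel one])
  have Z0: "\<And>N \<omega>. 0 \<le> Z N \<omega>"
    unfolding Z_def free_Z_def by simp
  have "((\<lambda>K::real. SUP N\<in>{1..}. \<integral>\<^sup>+ x. ennreal \<bar>Z N x\<bar> * indicator {x. \<bar>Z N x\<bar> > K} x \<partial>\<Omega>) \<longlongrightarrow> 0) at_top"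
    using UI unfolding uniformly_integrable_def Z_def \<Omega>_def h_def Q_def by simp
  then have "eventually (\<lambda>K. (SUP N\<in>{1..}. \<integral>\<^sup>+ x. ennreal \<bar>Z N x\<bar> * indicator {x. \<bar>Z N x\<bar> > K} x \<partial>\<Omega>) < 1/4) at_top"
    by (rule order_tendstoD(2)) (simp add: ennreal_zero_less_divide)
  then obtain K0 where K0: "\<And>K. K \<ge> K0 \<Longrightarrow> (SUP N\<in>{1..}. \<integral>\<^sup>+ x. ennreal \<bar>Z N x\<bar> * indicator {x. \<bar>Z N x\<bar> > K} x \<partial>\<Omega>) < 1/4"
    by (auto simp: eventually_at_top_linorder)
  define KK where "KK = max K0 1"
  have Kge: "KK \<ge> 1" unfolding KK_def by simp
  have Kb: "(\<integral>\<^sup>+ x. ennreal \<bar>Z N x\<bar> * indicator {x. \<bar>Z N x\<bar> > KK} x \<partial>\<Omega>) \<le> ennreal (1/4)" if N: "N \<ge> 1" for N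
  proof -
    have "(\<integral>\<^sup>+ x. ennreal \<bar>Z N x\<bar> * indicator {x. \<bar>Z N x\<bar> > KK} x \<partial>\<Omega>)
        \<le> (SUP N\<in>{1..}. \<integral>\<^sup>+ x. ennreal \<bar>Z N x\<bar> * indicator {x. \<bar>Z N x\<bar> > KK} x \<partial>\<Omega>)"
      by (rule SUP_upper) (use N in simp)
    also have "\<dots> < 1/4" by (rule K0) (simp add: KK_def)
    finally have "(\<integral>\<^sup>+ x. ennreal \<bar>Z N x\<bar> * indicator {x. \<bar>Z N x\<bar> > KK} x \<partial>\<Omega>) \<le> 1/4" by (rule less_imp_le)
    moreover have "ennreal (1/4) = 1/4" using ennreal_divide_numeral[of 1 "num.Bit0 (num.Bit0 num.One)"] by simp
    ultimately show ?thesis by simp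
  qed
  have pZ: "measure \<Omega> {\<omega>\<in>space \<Omega>. Z N \<omega> > 1/2} \<ge> 1/(4*KK)" if N: "N \<ge> 1" for N
  proof -
    define E where "E = {\<omega>\<in>space \<Omega>. Z N \<omega> > 1/2}"
    have Em[measurable]: "E \<in> sets \<Omega>" unfolding E_def by measurable
    have eqf: "(\<lambda>\<omega>. ennreal \<bar>Z N \<omega>\<bar> * indicator {x. \<bar>Z N x\<bar> > KK} \<omega>) = (\<lambda>\<omega>. if KK < \<bar>Z N \<omega>\<bar> then ennreal \<bar>Z N \<omega>\<bar> else 0)"
      by (auto simp: fun_eq_iff indicator_def)
    have m3: "(\<lambda>\<omega>. ennreal \<bar>Z N \<omega>\<bar> * indicator {x. \<bar>Z N x\<bar> > KK} \<omega>) \<in> borel_measurable \<Omega>"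
    proof (intro borel_measurable_times_ennreal measurable_compose[OF borel_measurable_abs[OF Zm] measurable_ennreal])
      have "{x \<in> space \<Omega>. KK < \<bar>Z N x\<bar>} \<in> sets \<Omega>" by measurable
      then have "{x \<in> space \<Omega>. (\<lambda>x. x) x \<in> (\<lambda>_. {x. \<bar>Z N x\<bar> > KK}) x} \<in> sets \<Omega>" by simp
      from borel_measurable_indicator'[OF this]
      show "(\<lambda>\<omega>. indicator {x. \<bar>Z N x\<bar> > KK} \<omega>) \<in> borel_measurable \<Omega>" by simp
    qed
    have pw: "ennreal (Z N \<omega>) \<le> ennreal (1/2) + ennreal KK * indicator E \<omega> + ennreal \<bar>Z N \<omega>\<bar> * indicator {x. \<bar>Z N x\<bar> > KK} \<omega>"
      if w: "\<omega> \<in> space \<Omega>" for \<omega>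
    proof (cases "Z N \<omega> \<le> 1/2")
      case True
      then have "ennreal (Z N \<omega>) \<le> ennreal (1/2)" by (rule ennreal_leI)
      then show ?thesis by (rule order.trans) (simp add: add.assoc)
    next
      case False
      then have "\<omega> \<in> E" using w by (simp add: E_def)
      show ?thesis
      proof (cases "Z N \<omega> \<le> KK")
        case True
        then have a: "ennreal (Z N \<omega>) \<le> ennreal KK * indicator E \<omega>" using \<open>\<omega> \<in> E\<close> by (simp add: ennreal_leI)
        have b: "ennreal KK * indicator E \<omega> \<le> ennreal (1/2) + ennreal KK * indicator E \<omega> + ennreal \<bar>Z N \<omega>\<bar> * indicator {x. \<bar>Z N x\<bar> > KK} \<omega>"
          using add_mono[OF add_mono[OF zero_le[of "ennreal (1/2)"] order.refl[of "ennreal KK * indicator E \<omega>"]] zero_le[of "ennreal \<bar>Z N \<omega>\<bar> * indicator {x. \<bar>Z N x\<bar> > KK} \<omega>"]]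
          by simp
        show ?thesis by (rule order.trans[OF a b])
      next
        case False
        then have "ennreal (Z N \<omega>) \<le> ennreal \<bar>Z N \<omega>\<bar> * indicator {x. \<bar>Z N x\<bar> > KK} \<omega>"
          using Z0[of N \<omega>] by simp
        then show ?thesis by (rule order.trans) simp
      qed
    qed
    have "1 = (\<integral>\<^sup>+\<omega>. ennreal (Z N \<omega>) \<partial>\<Omega>)" using Zint by simp
    also have "\<dots> \<le> (\<integral>\<^sup>+\<omega>. (ennreal (1/2) + ennreal KK * indicator E \<omega>) + ennreal \<bar>Z N \<omega>\<bar> * indicator {x. \<bar>Z N x\<bar> > KK} \<omega> \<partial>\<Omega>)"
      by (rule nn_integral_mono) (rule pw)
    also have "\<dots> = (\<integral>\<^sup>+\<omega>. (ennreal (1/2) + ennreal KK * indicator E \<omega>) \<partial>\<Omega>) + (\<integral>\<^sup>+\<omega>. ennreal \<bar>Z N \<omega>\<bar> * indicator {x. \<bar>Z N x\<bar> > KK} \<omega> \<partial>\<Omega>)"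
      by (rule nn_integral_add) (use m3 in auto)
    also have "(\<integral>\<^sup>+\<omega>. (ennreal (1/2) + ennreal KK * indicator E \<omega>) \<partial>\<Omega>) = ennreal (1/2) + ennreal KK * emeasure \<Omega> E"
      by (subst nn_integral_add) (auto simp: nn_integral_cmult_indicator O.emeasure_space_1)
    also have "emeasure \<Omega> E = ennreal (measure \<Omega> E)" by (rule O.emeasure_eq_measure)
    also have "ennreal (1/2) + ennreal KK * ennreal (measure \<Omega> E) + (\<integral>\<^sup>+\<omega>. ennreal \<bar>Z N \<omega>\<bar> * indicator {x. \<bar>Z N x\<bar> > KK} \<omega> \<partial>\<Omega>)
        \<le> ennreal (1/2) + ennreal KK * ennreal (measure \<Omega> E) + ennreal (1/4)"
      by (rule add_left_mono) (rule Kb[OF N])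
    also have "\<dots> = ennreal (1/2 + KK * measure \<Omega> E + 1/4)"
    proof -
      have m0: "0 \<le> measure \<Omega> E" by simp
      have k0: "0 \<le> KK" using Kge by simp
      have "ennreal (1/2 + KK * measure \<Omega> E + 1/4) = ennreal (1/2 + KK * measure \<Omega> E) + ennreal (1/4)"
        by (rule ennreal_plus) (use m0 k0 in simp_all)
      also have "ennreal (1/2 + KK * measure \<Omega> E) = ennreal (1/2) + ennreal (KK * measure \<Omega> E)"
        by (rule ennreal_plus) (use m0 k0 in simp_all)
      also have "ennreal (KK * measure \<Omega> E) = ennreal KK * ennreal (measure \<Omega> E)"
        by (rule ennreal_mult) (use m0 k0 in simp_all)
      finally show ?thesis by simp
    qed
    finally have "(1::ennreal) \<le> ennreal (1/2 + KK * measure \<Omega> E + 1/4)" .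
    then have "ennreal 1 \<le> ennreal (1/2 + KK * measure \<Omega> E + 1/4)" by (simp only: ennreal_1)
    moreover have pos: "0 \<le> 1/2 + KK * measure \<Omega> E + 1/4" using Kge by simp
    ultimately have "1 \<le> 1/2 + KK * measure \<Omega> E + 1/4"
      by (simp only: ennreal_le_iff[OF pos])
    then have "1 \<le> 4 * KK * measure \<Omega> E" by simp
    then show ?thesis using Kge unfolding E_def[symmetric] by (simp add: field_simps)
  qed
  show ?thesis
  proof (intro exI[of _ "1/(8*KK)"] conjI allI impI)
    show "1/(8*KK) > 0" using Kge by simp
    fix A :: "nat \<Rightarrow> (nat \<times> nat) stream set"
    assume A: "\<forall>N. A N \<in> sets (renewal_law inc)"
      and lim: "(\<lambda>N. measure (renewal_law inc) (A N)) \<longlonglongrightarrow> 0"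
    have "eventually (\<lambda>N. measure (renewal_law inc) (A N) < 1/(32*KK)) sequentially"
      by (rule order_tendstoD(2)[OF lim]) (use Kge in simp)
    then obtain N1 where N1: "\<And>N. N \<ge> N1 \<Longrightarrow> measure (renewal_law inc) (A N) < 1/(32*KK)"
      by (auto simp: eventually_sequentially)
    show "\<exists>N0\<ge>1. \<forall>N\<ge>N0.
              measure (Pi\<^sub>M UNIV (\<lambda>_. \<mu>))
                {\<omega> \<in> space (Pi\<^sub>M UNIV (\<lambda>_. \<mu>)).
                   polymer_prob inc \<beta> (- ln (\<integral>x. exp (\<beta> * x) \<partial>\<mu>)) N (M N) \<omega> (A N) \<le> 1/2 \<and>
                   free_Z inc \<beta> (- ln (\<integral>x. exp (\<beta> * x) \<partial>\<mu>)) N (M N) \<omega> > 1/2} \<ge> 1/(8*KK)"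
    proof (intro exI[of _ "max N1 1"] conjI allI impI)
      show "max N1 1 \<ge> 1" by simp
      fix N assume "max N1 1 \<le> N"
      then have N: "N \<ge> 1" "N \<ge> N1" by auto
      define W where "W = (\<lambda>\<omega>. \<integral>s. indicator (A N) s * exp (hamiltonian \<beta> h N (M N) \<omega> s) \<partial>renewal_law inc)"
      have AN: "A N \<in> sets (renewal_law inc)" using A by simp
      have Wm[measurable]: "W \<in> borel_measurable \<Omega>"
        unfolding W_def \<Omega>_def by (rule W_facts(1)[OF mu_prob mu_borel one AN])
      have Wi: "(\<integral>\<^sup>+\<omega>. ennreal (W \<omega>) \<partial>\<Omega>) = emeasure (renewal_law inc) (A N)"
        unfolding W_def \<Omega>_def by (rule W_facts(2)[OF mu_prob mu_borel one AN])
      have W0: "\<And>\<omega>. 0 \<le> W \<omega>" unfolding W_def by simp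
      define Ez where "Ez = {\<omega> \<in> space \<Omega>. Z N \<omega> > 1/2}"
      define Ew where "Ew = {\<omega> \<in> space \<Omega>. W \<omega> > 1/4}"
      define T where "T = {\<omega> \<in> space \<Omega>. W \<omega> / Z N \<omega> \<le> 1/2 \<and> Z N \<omega> > 1/2}"
      have Ezm: "Ez \<in> sets \<Omega>" unfolding Ez_def by measurable
      have Ewm: "Ew \<in> sets \<Omega>" unfolding Ew_def by measurable
      have Tm: "T \<in> sets \<Omega>" unfolding T_def by measurable
      have sub: "Ez - Ew \<subseteq> T"
      proof
        fix \<omega> assume "\<omega> \<in> Ez - Ew"
        then have w: "\<omega> \<in> space \<Omega>" "Z N \<omega> > 1/2" "W \<omega> \<le> 1/4"
          by (auto simp: Ez_def Ew_def)
        then have "W \<omega> \<le> 1/2 * Z N \<omega>" by simp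
        then have "W \<omega> / Z N \<omega> \<le> 1/2" using w(2) by (simp add: pos_divide_le_eq)
        then show "\<omega> \<in> T" using w by (simp add: T_def)
      qed
      have pW: "measure \<Omega> Ew \<le> 4 * measure (renewal_law inc) (A N)"
      proof -
        have "emeasure \<Omega> Ew \<le> emeasure \<Omega> {x \<in> space \<Omega>. 1 \<le> 4 * ennreal (W x)}"
        proof (rule emeasure_mono)
          show "Ew \<subseteq> {x \<in> space \<Omega>. 1 \<le> 4 * ennreal (W x)}"
          proof
            fix x assume "x \<in> Ew"
            then have x: "x \<in> space \<Omega>" "W x > 1/4" by (auto simp: Ew_def)
            have "4 * ennreal (W x) = ennreal (4 * W x)" using W0[of x] by (simp add: ennreal_mult)
            moreover have "ennreal 1 \<le> ennreal (4 * W x)" using x(2) by (intro ennreal_leI) simp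
            ultimately show "x \<in> {x \<in> space \<Omega>. 1 \<le> 4 * ennreal (W x)}" using x(1) by simp
          qed
          show "{x \<in> space \<Omega>. 1 \<le> 4 * ennreal (W x)} \<in> sets \<Omega>" by measurable
        qed
        also have "\<dots> \<le> 4 * (\<integral>\<^sup>+x. ennreal (W x) * indicator (space \<Omega>) x \<partial>\<Omega>)"
          by (rule nn_integral_Markov_inequality) auto
        also have "(\<integral>\<^sup>+x. ennreal (W x) * indicator (space \<Omega>) x \<partial>\<Omega>) = (\<integral>\<^sup>+x. ennreal (W x) \<partial>\<Omega>)"
          by (intro nn_integral_cong) simp
        also have "\<dots> = ennreal (measure (renewal_law inc) (A N))"
          using Wi by (simp add: R.emeasure_eq_measure)
        also have "4 * ennreal (measure (renewal_law inc) (A N)) = ennreal (4 * measure (renewal_law inc) (A N))"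
          by (simp add: ennreal_mult)
        finally have "ennreal (measure \<Omega> Ew) \<le> ennreal (4 * measure (renewal_law inc) (A N))"
          by (simp add: O.emeasure_eq_measure)
        then show ?thesis by (subst (asm) ennreal_le_iff) auto
      qed
      have "1/(8*KK) \<le> measure \<Omega> Ez - measure \<Omega> Ew"
      proof -
        have "measure \<Omega> Ez \<ge> 1/(4*KK)" using pZ[OF N(1)] by (simp add: Ez_def)
        moreover have "measure \<Omega> Ew \<le> 4 * (1/(32*KK))" using pW N1[OF N(2)] by simp
        ultimately show ?thesis using Kge by (simp add: field_simps)
      qed
      also have "measure \<Omega> Ez - measure \<Omega> Ew \<le> measure \<Omega> (Ez - Ew)"
      proof -
        have "measure \<Omega> Ez \<le> measure \<Omega> ((Ez - Ew) \<union> Ew)"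
          by (rule O.finite_measure_mono) (use Ezm Ewm in auto)
        also have "\<dots> \<le> measure \<Omega> (Ez - Ew) + measure \<Omega> Ew"
          by (rule measure_Un_le) (use Ezm Ewm in auto)
        finally show ?thesis by simp
      qed
      also have "\<dots> \<le> measure \<Omega> T"
        by (rule O.finite_measure_mono[OF sub Tm])
      finally have fin: "1/(8*KK) \<le> measure \<Omega> T" .
      then show "measure (Pi\<^sub>M UNIV (\<lambda>_. \<mu>))
                {\<omega> \<in> space (Pi\<^sub>M UNIV (\<lambda>_. \<mu>)).
                   polymer_prob inc \<beta> (- ln (\<integral>x. exp (\<beta> * x) \<partial>\<mu>)) N (M N) \<omega> (A N) \<le> 1/2 \<and>
                   free_Z inc \<beta> (- ln (\<integral>x. exp (\<beta> * x) \<partial>\<mu>)) N (M N) \<omega> > 1/2} \<ge> 1/(8*KK)"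
        unfolding polymer_prob_def using fin unfolding T_def W_def Z_def h_def Q_def \<Omega>_def by simp
    qed
  qed
qed

end
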